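(* In the setting of the context, fix two distinct exposures $d_k\ne d_l$ and assume $\pi_{ij}(d_k,d_l)>0$ for all $i\ne j$. Define $$\widehat{\mathrm{Cov}}[\widehat{y^T_{HT}}(d_k),\widehat{y^T_{HT}}(d_l)] = \sum_{i\in U}\sum_{j\in U\setminus\{i\}}\frac{\mathbf{I}(D_i=d_k)\mathbf{I}(D_j=d_l)}{\pi_{ij}(d_k,d_l)}\,\frac{y_i(d_k)}{\pi_i(d_k)}\frac{y_j(d_l)}{\pi_j(d_l)}\big[\pi_{ij}(d_k,d_l)-\pi_i(d_k)\pi_j(d_l)\big] - \sum_{i\in U}\left[\frac{\mathbf{I}(D_i=d_k)y_i(d_k)^2}{2\pi_i(d_k)}+\frac{\mathbf{I}(D_i=d_l)y_i(d_l)^2}{2\pi_i(d_l)}\right].$$ Then $\mathrm{E}\big[\widehat{\mathrm{Cov}}[\widehat{y^T_{HT}}(d_k),\widehat{y^T_{HT}}(d_l)]\big]\le \mathrm{Cov}\big[\widehat{y^T_{HT}}(d_k),\widehat{y^T_{HT}}(d_l)\big]$, and equality holds if $y_i(d_k)=y_i(d_l)$ for all $i\in U$.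
   Context: A finite population $U$ of units $i=1,\dots,N$. A random treatment assignment vector $\mathbf{Z}$ takes values in $\Omega=\{\mathbf{z}\in\{1,\dots,M\}^N:p_{\mathbf{z}}>0\}$ with known probabilities $\Pr(\mathbf{Z}=\mathbf{z})=p_{\mathbf{z}}$. An exposure mapping $f:\Omega\times\Theta\to\Delta=\{d_1,\dots,d_K\}$ with unit traits $\theta_i$ gives exposures $D_i=f(\mathbf{Z},\theta_i)$. Write $\pi_i(d)=\Pr(D_i=d)$ and $\pi_{ij}(d,d')=\Pr(D_i=d,D_j=d')$; assume $0<\pi_i(d_k)<1$ for all $i,k$. Potential outcomes $y_i(d_1),\dots,y_i(d_K)$ are fixed real numbers; the observed outcome is $y_i(D_i)$. The Horvitz–Thompson total estimator is $\widehat{y^T_{HT}}(d)=\sum_{i=1}^N\mathbf{I}(D_i=d)\,y_i(d)/\pi_i(d)$. Expectations and covariances are with respect to the randomization distribution of $\mathbf{Z}$. *)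

theory Defs
  imports "HOL-Probability.Probability"
begin

text \<open>Units are the elements of a finite type 'u (U = UNIV, N = CARD('u)).
Assignments are vectors z :: 'u \<Rightarrow> nat with entries in {1..M}; the random
assignment Z is a pmf (its support is \<Omega>). Exposure of unit i under z is
f z (theta i).\<close>

definition expo_prob :: "('u \<Rightarrow> nat) pmf \<Rightarrow> (('u \<Rightarrow> nat) \<Rightarrow> 'th \<Rightarrow> 'd) \<Rightarrow> ('u \<Rightarrow> 'th) \<Rightarrow> 'u \<Rightarrow> 'd \<Rightarrow> real" where
  "expo_prob Z f \<theta> i d = measure_pmf.prob Z {z. f z (\<theta> i) = d}"

definition joint_expo_prob :: "('u \<Rightarrow> nat) pmf \<Rightarrow> (('u \<Rightarrow> nat) \<Rightarrow> 'th \<Rightarrow> 'd) \<Rightarrow> ('u \<Rightarrow> 'th) \<Rightarrow> 'u \<Rightarrow> 'u \<Rightarrow> 'd \<Rightarrow> 'd \<Rightarrow> real" where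
  "joint_expo_prob Z f \<theta> i j d d' = measure_pmf.prob Z {z. f z (\<theta> i) = d \<and> f z (\<theta> j) = d'}"

definition HT_total :: "('u::finite \<Rightarrow> nat) pmf \<Rightarrow> (('u \<Rightarrow> nat) \<Rightarrow> 'th \<Rightarrow> 'd) \<Rightarrow> ('u \<Rightarrow> 'th) \<Rightarrow> ('u \<Rightarrow> 'd \<Rightarrow> real) \<Rightarrow> 'd \<Rightarrow> ('u \<Rightarrow> nat) \<Rightarrow> real" where
  "HT_total Z f \<theta> y d z = (\<Sum>i\<in>UNIV. of_bool (f z (\<theta> i) = d) * y i d / expo_prob Z f \<theta> i d)"

definition cov_hat :: "('u::finite \<Rightarrow> nat) pmf \<Rightarrow> (('u \<Rightarrow> nat) \<Rightarrow> 'th \<Rightarrow> 'd) \<Rightarrow> ('u \<Rightarrow> 'th) \<Rightarrow> ('u \<Rightarrow> 'd \<Rightarrow> real) \<Rightarrow> 'd \<Rightarrow> 'd \<Rightarrow> ('u \<Rightarrow> nat) \<Rightarrow> real" where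
  "cov_hat Z f \<theta> y dk dl z =
     (\<Sum>i\<in>UNIV. \<Sum>j\<in>UNIV - {i}.
        of_bool (f z (\<theta> i) = dk) * of_bool (f z (\<theta> j) = dl) / joint_expo_prob Z f \<theta> i j dk dl
        * (y i dk / expo_prob Z f \<theta> i dk) * (y j dl / expo_prob Z f \<theta> j dl)
        * (joint_expo_prob Z f \<theta> i j dk dl - expo_prob Z f \<theta> i dk * expo_prob Z f \<theta> j dl))
   - (\<Sum>i\<in>UNIV. of_bool (f z (\<theta> i) = dk) * (y i dk)\<^sup>2 / (2 * expo_prob Z f \<theta> i dk)
              + of_bool (f z (\<theta> i) = dl) * (y i dl)\<^sup>2 / (2 * expo_prob Z f \<theta> i dl))"

definition pmf_cov :: "'a pmf \<Rightarrow> ('a \<Rightarrow> real) \<Rightarrow> ('a \<Rightarrow> real) \<Rightarrow> real" where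
  "pmf_cov Z X Y = measure_pmf.expectation Z
     (\<lambda>z. (X z - measure_pmf.expectation Z X) * (Y z - measure_pmf.expectation Z Y))"

end

theory Submission
  imports Defs
begin

lemma E_ind:
  fixes Z :: "'a pmf"
  shows "measure_pmf.expectation Z (\<lambda>z. of_bool (P z) :: real) = measure_pmf.prob Z {z. P z}"
proof -
  have "(\<lambda>z. of_bool (P z) :: real) = indicator {z. P z}" by (auto simp: indicator_def)
  then show ?thesis by simp
qed

theorem mainTheorem2:
  fixes Z :: "('u::finite \<Rightarrow> nat) pmf" and M :: nat
    and f :: "('u \<Rightarrow> nat) \<Rightarrow> 'th \<Rightarrow> 'd" and \<theta> :: "'u \<Rightarrow> 'th"
    and \<Delta> :: "'d set" and y :: "'u \<Rightarrow> 'd \<Rightarrow> real" and dk dl :: 'd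
  assumes assign: "\<forall>z\<in>set_pmf Z. \<forall>i. z i \<in> {1..M}"
    and Delta_fin: "finite \<Delta>"
    and expo_range: "\<forall>z\<in>set_pmf Z. \<forall>t. f z t \<in> \<Delta>"
    and pos: "\<forall>i. \<forall>d\<in>\<Delta>. 0 < expo_prob Z f \<theta> i d \<and> expo_prob Z f \<theta> i d < 1"
    and dk: "dk \<in> \<Delta>" and dl: "dl \<in> \<Delta>" and dkl: "dk \<noteq> dl"
    and joint_pos: "\<forall>i j. i \<noteq> j \<longrightarrow> 0 < joint_expo_prob Z f \<theta> i j dk dl"
  shows "measure_pmf.expectation Z (cov_hat Z f \<theta> y dk dl)
           \<le> pmf_cov Z (HT_total Z f \<theta> y dk) (HT_total Z f \<theta> y dl)
         \<and> ((\<forall>i. y i dk = y i dl) \<longrightarrow>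
             measure_pmf.expectation Z (cov_hat Z f \<theta> y dk dl)
             = pmf_cov Z (HT_total Z f \<theta> y dk) (HT_total Z f \<theta> y dl))"
proof -
  have fin: "finite (set_pmf Z)"
  proof (rule finite_subset)
    show "set_pmf Z \<subseteq> {g. \<forall>x. (x \<in> (UNIV::'u set) \<longrightarrow> g x \<in> {1..M}) \<and> (x \<notin> UNIV \<longrightarrow> g x = 0)}"
      using assign by auto
    show "finite {g. \<forall>x. (x \<in> (UNIV::'u set) \<longrightarrow> g x \<in> {1..M}) \<and> (x \<notin> UNIV \<longrightarrow> g x = 0)}"
      by (rule finite_set_of_finite_funs) auto
  qed
  have int: "\<And>g. integrable (measure_pmf Z) (g :: _ \<Rightarrow> real)"
    using integrable_measure_pmf_finite[OF fin] by blast
  define E where "E = (\<lambda>g. measure_pmf.expectation Z (g :: _ \<Rightarrow> real))"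
  define Ik where "Ik = (\<lambda>i z. of_bool (f z (\<theta> i) = dk) :: real)"
  define Il where "Il = (\<lambda>i z. of_bool (f z (\<theta> i) = dl) :: real)"
  define pk where "pk = (\<lambda>i. expo_prob Z f \<theta> i dk)"
  define pl where "pl = (\<lambda>i. expo_prob Z f \<theta> i dl)"
  define J where "J = (\<lambda>i j. joint_expo_prob Z f \<theta> i j dk dl)"
  define yk where "yk = (\<lambda>i. y i dk)"
  define yl where "yl = (\<lambda>i. y i dl)"
  define ck where "ck = (\<lambda>i. yk i / pk i)"
  define cl where "cl = (\<lambda>i. yl i / pl i)"
  have pkpos: "\<And>i. pk i > 0" using pos dk unfolding pk_def by auto
  have plpos: "\<And>i. pl i > 0" using pos dl unfolding pl_def by auto
  have Jpos: "\<And>i j. i \<noteq> j \<Longrightarrow> J i j > 0" using joint_pos unfolding J_def by auto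
  have Jii: "\<And>i. J i i = 0"
  proof -
    fix i
    have "{z. f z (\<theta> i) = dk \<and> f z (\<theta> i) = dl} = {}" using dkl by auto
    then show "J i i = 0" unfolding J_def joint_expo_prob_def by (metis measure_empty)
  qed
  have Elin_sum: "\<And>g A. finite A \<Longrightarrow> E (\<lambda>z. \<Sum>i\<in>A. g i z) = (\<Sum>i\<in>A. E (g i))"
    unfolding E_def using int by (simp add: Bochner_Integration.integral_sum)
  have Ecmul: "\<And>g c. E (\<lambda>z. g z * c) = E g * c"
    unfolding E_def by simp
  have Ediff: "\<And>g h. E (\<lambda>z. g z - h z) = E g - E h"
    unfolding E_def using int by (simp add: Bochner_Integration.integral_diff)
  have Econst: "\<And>c. E (\<lambda>z. c) = c" unfolding E_def by simp
  have EIk: "\<And>i. E (Ik i) = pk i"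
    unfolding E_def Ik_def pk_def expo_prob_def by (rule E_ind)
  have EIl: "\<And>i. E (Il i) = pl i"
    unfolding E_def Il_def pl_def expo_prob_def by (rule E_ind)
  have EIkl: "\<And>i j. E (\<lambda>z. Ik i z * Il j z) = J i j"
  proof -
    fix i j
    have "(\<lambda>z. Ik i z * Il j z) = (\<lambda>z. of_bool (f z (\<theta> i) = dk \<and> f z (\<theta> j) = dl))"
      unfolding Ik_def Il_def by auto
    then show "E (\<lambda>z. Ik i z * Il j z) = J i j"
      unfolding E_def J_def joint_expo_prob_def using E_ind by metis
  qed
  define X where "X = HT_total Z f \<theta> y dk"
  define Y where "Y = HT_total Z f \<theta> y dl"
  have X: "X = (\<lambda>z. \<Sum>i\<in>UNIV. Ik i z * ck i)"
    unfolding X_def HT_total_def Ik_def ck_def yk_def pk_def by auto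
  have Y: "Y = (\<lambda>z. \<Sum>i\<in>UNIV. Il i z * cl i)"
    unfolding Y_def HT_total_def Il_def cl_def yl_def pl_def by auto
  have EX: "E X = (\<Sum>i\<in>UNIV. yk i)"
  proof -
    have "E X = (\<Sum>i\<in>UNIV. E (\<lambda>z. Ik i z * ck i))" unfolding X by (rule Elin_sum) simp
    also have "\<dots> = (\<Sum>i\<in>UNIV. pk i * ck i)" by (simp only: Ecmul EIk)
    also have "\<dots> = (\<Sum>i\<in>UNIV. yk i)" using pkpos by (auto intro!: sum.cong simp add: ck_def) (metis less_irrefl)
    finally show ?thesis .
  qed
  have EY: "E Y = (\<Sum>i\<in>UNIV. yl i)"
  proof -
    have "E Y = (\<Sum>i\<in>UNIV. E (\<lambda>z. Il i z * cl i))" unfolding Y by (rule Elin_sum) simp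
    also have "\<dots> = (\<Sum>i\<in>UNIV. pl i * cl i)" by (simp only: Ecmul EIl)
    also have "\<dots> = (\<Sum>i\<in>UNIV. yl i)" using plpos by (auto intro!: sum.cong simp add: cl_def) (metis less_irrefl)
    finally show ?thesis .
  qed
  have XY: "(\<lambda>z. X z * Y z) = (\<lambda>z. \<Sum>i\<in>UNIV. \<Sum>j\<in>UNIV. Ik i z * Il j z * (ck i * cl j))"
    unfolding X Y by (auto simp: sum_product algebra_simps)
  have EXY: "E (\<lambda>z. X z * Y z) = (\<Sum>i\<in>UNIV. \<Sum>j\<in>UNIV. J i j * (ck i * cl j))"
    unfolding XY by (simp only: Elin_sum finite Ecmul EIkl)
  have cov: "pmf_cov Z X Y = E (\<lambda>z. X z * Y z) - E X * E Y"
  proof -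
    have "(\<lambda>z. (X z - E X) * (Y z - E Y)) = (\<lambda>z. (X z * Y z - (X z * E Y + Y z * E X)) + E X * E Y)"
      by (auto simp: algebra_simps)
    then have "pmf_cov Z X Y = E (\<lambda>z. (X z * Y z - (X z * E Y + Y z * E X)) + E X * E Y)"
      unfolding pmf_cov_def E_def by simp
    also have "\<dots> = E (\<lambda>z. X z * Y z) - (E X * E Y + E Y * E X) + E X * E Y"
      unfolding E_def using int by (simp add: integral_add integral_diff)
    finally show ?thesis by simp
  qed
  have CH: "cov_hat Z f \<theta> y dk dl = (\<lambda>z. (\<Sum>i\<in>UNIV. \<Sum>j\<in>UNIV - {i}. Ik i z * Il j z * (ck i * cl j * (J i j - pk i * pl j) / J i j))
      - (\<Sum>i\<in>UNIV. Ik i z * (yk i ^ 2 / (2 * pk i)) + Il i z * (yl i ^ 2 / (2 * pl i))))"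
    unfolding cov_hat_def Ik_def Il_def ck_def cl_def J_def pk_def pl_def yk_def yl_def
    by (rule ext) (simp add: field_simps)
  have Eadd: "\<And>g h. E (\<lambda>z. g z + h z) = E g + E h"
    unfolding E_def using int by (simp add: Bochner_Integration.integral_add)
  have ECH: "E (cov_hat Z f \<theta> y dk dl) = (\<Sum>i\<in>UNIV. \<Sum>j\<in>UNIV - {i}. ck i * cl j * (J i j - pk i * pl j))
      - (\<Sum>i\<in>UNIV. (yk i ^ 2 / 2) + (yl i ^ 2 / 2))"
  proof -
    have h1: "E (cov_hat Z f \<theta> y dk dl) = (\<Sum>i\<in>UNIV. \<Sum>j\<in>UNIV - {i}. J i j * (ck i * cl j * (J i j - pk i * pl j) / J i j))
      - (\<Sum>i\<in>UNIV. pk i * (yk i ^ 2 / (2 * pk i)) + pl i * (yl i ^ 2 / (2 * pl i)))"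
      unfolding CH by (simp only: Ediff Elin_sum finite finite_Diff Eadd Ecmul EIkl EIk EIl mult.commute)
    have h2: "(\<Sum>i\<in>UNIV. \<Sum>j\<in>UNIV - {i}. J i j * (ck i * cl j * (J i j - pk i * pl j) / J i j))
       = (\<Sum>i\<in>UNIV. \<Sum>j\<in>UNIV - {i}. ck i * cl j * (J i j - pk i * pl j))"
    proof (intro sum.cong refl)
      fix i j :: 'u assume "j \<in> UNIV - {i}"
      then have "i \<noteq> j" by auto
      then have "J i j \<noteq> 0" using Jpos[of i j] by linarith
      then show "J i j * (ck i * cl j * (J i j - pk i * pl j) / J i j) = ck i * cl j * (J i j - pk i * pl j)"
        by simp
    qed
    have h3: "(\<Sum>i\<in>UNIV. pk i * (yk i ^ 2 / (2 * pk i)) + pl i * (yl i ^ 2 / (2 * pl i)))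
       = (\<Sum>i\<in>UNIV. (yk i ^ 2 / 2) + (yl i ^ 2 / 2))"
    proof (intro sum.cong refl)
      fix i :: 'u
      have "pk i \<noteq> 0" "pl i \<noteq> 0" using pkpos[of i] plpos[of i] by linarith+
      then show "pk i * (yk i ^ 2 / (2 * pk i)) + pl i * (yl i ^ 2 / (2 * pl i)) = (yk i ^ 2 / 2) + (yl i ^ 2 / 2)"
        by simp
    qed
    show ?thesis using h1 unfolding h2 h3 .
  qed
  have A: "\<And>i. (\<Sum>j\<in>UNIV. J i j * (ck i * cl j)) = (\<Sum>j\<in>UNIV-{i}. J i j * (ck i * cl j))"
    by (subst sum.remove[of UNIV i]) (auto simp: Jii)
  have ykc: "\<And>i. yk i = ck i * pk i" using pkpos unfolding ck_def by (metis less_irrefl nonzero_eq_divide_eq)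
  have ylc: "\<And>i. yl i = cl i * pl i" using plpos unfolding cl_def by (metis less_irrefl nonzero_eq_divide_eq)
  have B: "\<And>i. (\<Sum>j\<in>UNIV. yk i * yl j) = yk i * yl i + (\<Sum>j\<in>UNIV-{i}. ck i * cl j * (pk i * pl j))"
    by (subst sum.remove[of UNIV i]) (auto simp: ykc ylc algebra_simps)
  have C: "\<And>i. (\<Sum>j\<in>UNIV-{i}. ck i * cl j * (J i j - pk i * pl j)) =
      (\<Sum>j\<in>UNIV-{i}. J i j * (ck i * cl j)) - (\<Sum>j\<in>UNIV-{i}. ck i * cl j * (pk i * pl j))"
    by (simp add: sum_subtractf[symmetric] algebra_simps)
  have cv: "pmf_cov Z X Y = (\<Sum>i\<in>UNIV. (\<Sum>j\<in>UNIV-{i}. J i j * (ck i * cl j)))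
       - (\<Sum>i\<in>UNIV. yk i * yl i + (\<Sum>j\<in>UNIV-{i}. ck i * cl j * (pk i * pl j)))"
    unfolding cov EXY EX EY sum_product by (simp only: A B)
  have D: "pmf_cov Z X Y - E (cov_hat Z f \<theta> y dk dl) = (\<Sum>i\<in>UNIV. (yk i - yl i)^2 / 2)"
    unfolding cv ECH C
    by (simp add: sum_subtractf[symmetric] sum.distrib[symmetric] power2_eq_square algebra_simps diff_divide_distrib add_divide_distrib)
  have nn: "0 \<le> (\<Sum>i\<in>UNIV. (yk i - yl i)^2 / 2)" by (intro sum_nonneg) simp
  have eq: "(\<forall>i. y i dk = y i dl) \<Longrightarrow> (\<Sum>i\<in>UNIV. (yk i - yl i)^2 / 2) = 0"
    unfolding yk_def yl_def by simp
  show ?thesis using D nn eq unfolding X_def Y_def E_def by auto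
qed

end
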